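(* Let $(\nu_1,\ldots,\nu_r)\in(\underline{\Lambda}^r_n)_0$. Then $L^{(\nu_1,\ldots,\nu_r)}\cong\Delta^{(\nu_1,\ldots,\nu_r)}$ (i.e. the cell form of $\Delta^{(\nu_1,\ldots,\nu_r)}$ is nondegenerate) if and only if $D^{\nu_i}\cong S^{\nu_i}$ for every $i=1,\ldots,r$, and $L^{\lambda_i}\cong\Delta^{\lambda_i}$ for every $i$ with $\nu_i\ne()$.
   Context: $k$ is a field of characteristic $p\ge0$. $A$ is a cellular algebra with totally ordered cell indices $\lambda_1>\cdots>\lambda_r$, cell modules $\Delta^\lambda$ with cell forms, $\Lambda_0$ the set of $\lambda$ whose cell form is nonzero and $L^\lambda=\Delta^\lambda/\mathrm{rad}$. For a partition $\nu$ of $m$, $S^\nu$ is the cell module of $kS_m$ in its standard cellular structure (dual of James's Specht module) and, for $\nu$ $p$-restricted, $D^\nu$ is its quotient by the radical of its cell form. $A\wr S_n$ is $kS_n\otimes A^{\otimes n}$ with product $(\sigma;a)(\pi;b)=(\sigma\pi;a_{(1)\pi^{-1}}b_1,\ldots,a_{(n)\pi^{-1}}b_n)$ (permutations act on the right). It is cellular with anti-involution $(\sigma;a_1,\ldots,a_n)^*=(\sigma^{-1};a^*_{(1)\sigma},\ldots,a^*_{(n)\sigma})$ and cell indices the length-$r$ multipartitions of $n$; for $\mu=(|\nu_1|,\ldots,|\nu_r|)$ the cell module is $\Delta^{(\nu_1,\ldots,\nu_r)}=(\Delta(\lambda_1)^{\otimes\mu_1}\otimes\cdots\otimes\Delta(\lambda_r)^{\otimes\mu_r}\otimes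 S^{\nu_1}\otimes\cdots\otimes S^{\nu_r})\otimes_{A\wr S_\mu}A\wr S_n$ (where $A\wr S_\mu$, spanned by $(\sigma;a)$ with $\sigma$ in the Young subgroup $S_\mu$, acts by $(x_1\otimes\cdots\otimes x_n\otimes y_1\otimes\cdots\otimes y_r)(\sigma;a_1,\ldots,a_n)=x_{(1)\sigma^{-1}}a_1\otimes\cdots\otimes x_{(n)\sigma^{-1}}a_n\otimes y_1\sigma_1\otimes\cdots\otimes y_r\sigma_r$), with cell form $\langle x\otimes y\otimes\gamma,x'\otimes y'\otimes\gamma'\rangle=\delta_{\gamma\gamma'}\prod_i\langle y_i,y'_i\rangle\prod_j\langle x_j,x'_j\rangle$ for $\gamma,\gamma'$ minimal-length right coset representatives of $S_\mu$ in $S_n$. $(\underline{\Lambda}^r_n)_0$ is the set of multipartitions whose cell form is nonzero and $L^{(\nu_1,\ldots,\nu_r)}$ is $\Delta^{(\nu_1,\ldots,\nu_r)}$ modulo the radical of its cell form. *)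

theory Defs
  imports "HOL-Combinatorics.Permutations" "HOL-Library.FuncSet"
begin

text \<open>A bilinear form on the k-span of a finite index set I, given by its Gram
matrix G on that basis, is nondegenerate iff its radical is zero.\<close>
definition nondeg :: "'i set \<Rightarrow> ('i \<Rightarrow> 'i \<Rightarrow> 'k::field) \<Rightarrow> bool" where
  "nondeg I G \<longleftrightarrow>
     (\<forall>v::'i \<Rightarrow> 'k. (\<forall>t\<in>I. (\<Sum>s\<in>I. v s * G s t) = 0) \<longrightarrow> (\<forall>s\<in>I. v s = 0))"

definition form_nonzero :: "'i set \<Rightarrow> ('i \<Rightarrow> 'i \<Rightarrow> 'k::field) \<Rightarrow> bool" where
  "form_nonzero I G \<longleftrightarrow> (\<exists>s\<in>I. \<exists>t\<in>I. G s t \<noteq> 0)"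

section \<open>Cellular algebras (given by structure constants on a cellular basis)\<close>

text \<open>Cell indices are 0,...,r-1 with the total order lambda_0 > lambda_1 > ... ;
 i.e. index i corresponds to the paper's lambda_(i+1), and a smaller index is a
 larger cell index. M i is the indexing set of the cell i. The algebra A has basis
 C(i,s,t), (i,s,t) in cbasis, and C_b1 C_b2 = sum_b sc b1 b2 b * C_b.\<close>

definition cbasis :: "nat \<Rightarrow> (nat \<Rightarrow> 'm set) \<Rightarrow> (nat \<times> 'm \<times> 'm) set" where
  "cbasis r M = {(i,s,t). i < r \<and> s \<in> M i \<and> t \<in> M i}"

fun cflip :: "nat \<times> 'm \<times> 'm \<Rightarrow> nat \<times> 'm \<times> 'm" where
  "cflip (i,s,t) = (i,t,s)"

definition cellular_algebra ::
  "nat \<Rightarrow> (nat \<Rightarrow> 'm set) \<Rightarrow> (nat \<times> 'm \<times> 'm \<Rightarrow> nat \<times> 'm \<times> 'm \<Rightarrow> nat \<times> 'm \<times> 'm \<Rightarrow> 'k::field) \<Rightarrow> bool"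
where
  "cellular_algebra r M sc \<longleftrightarrow>
     (\<forall>i<r. finite (M i)) \<and>
     \<comment> \<open>associativity\<close>
     (\<forall>b1\<in>cbasis r M. \<forall>b2\<in>cbasis r M. \<forall>b3\<in>cbasis r M. \<forall>b\<in>cbasis r M.
        (\<Sum>c\<in>cbasis r M. sc b1 b2 c * sc c b3 b) = (\<Sum>c\<in>cbasis r M. sc b2 b3 c * sc b1 c b)) \<and>
     \<comment> \<open>existence of a unit\<close>
     (\<exists>u. \<forall>b\<in>cbasis r M. \<forall>b'\<in>cbasis r M.
        (\<Sum>c\<in>cbasis r M. u c * sc c b b') = (if b' = b then 1 else 0) \<and>
        (\<Sum>c\<in>cbasis r M. u c * sc b c b') = (if b' = b then 1 else 0)) \<and>
     \<comment> \<open>the linear map with C(i,s,t)* = C(i,t,s) is an anti-automorphism\<close>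
     (\<forall>b1\<in>cbasis r M. \<forall>b2\<in>cbasis r M. \<forall>b\<in>cbasis r M.
        sc b1 b2 (cflip b) = sc (cflip b2) (cflip b1) b) \<and>
     \<comment> \<open>cellular multiplication rule:  a C(i,s,t) = sum_s' r_a(s',s) C(i,s',t) mod A(<lambda_i)\<close>
     (\<forall>a\<in>cbasis r M. \<forall>i<r. \<forall>s\<in>M i. \<exists>\<rho>. \<forall>t\<in>M i. \<forall>j u v.
        (j,u,v) \<in> cbasis r M \<longrightarrow> j \<le> i \<longrightarrow>
        sc a (i,s,t) (j,u,v) = (if j = i \<and> v = t then \<rho> u else 0))"

text \<open>Cell form of the cell module Delta(lambda_i):
  C(i,a,s) C(i,t,b) = <s,t> C(i,a,b) mod A(<lambda_i) (take a = s, b = t).\<close>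
definition cell_form ::
  "(nat \<times> 'm \<times> 'm \<Rightarrow> nat \<times> 'm \<times> 'm \<Rightarrow> nat \<times> 'm \<times> 'm \<Rightarrow> 'k::field) \<Rightarrow> nat \<Rightarrow> 'm \<Rightarrow> 'm \<Rightarrow> 'k"
where
  "cell_form sc i s t = sc (i,s,s) (i,t,t) (i,s,t)"

definition is_partition :: "nat list \<Rightarrow> bool" where
  "is_partition \<nu> \<longleftrightarrow> sorted_wrt (\<ge>) \<nu> \<and> 0 \<notin> set \<nu>"

definition partitions_of :: "nat \<Rightarrow> nat list set" where
  "partitions_of m = {\<nu>. is_partition \<nu> \<and> sum_list \<nu> = m}"

definition dominates_strictly :: "nat list \<Rightarrow> nat list \<Rightarrow> bool" where
  "dominates_strictly \<mu> \<nu> \<longleftrightarrow>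
     \<mu> \<noteq> \<nu> \<and> (\<forall>k. sum_list (take k \<nu>) \<le> sum_list (take k \<mu>))"

text \<open>Block (row) containing position j (0-based) for a composition \<mu>.\<close>
definition block_of :: "nat list \<Rightarrow> nat \<Rightarrow> nat" where
  "block_of \<mu> j = (LEAST i. j < sum_list (take (Suc i) \<mu>))"

definition nodes :: "nat list \<Rightarrow> (nat \<times> nat) set" where
  "nodes \<nu> = {(a,b). a < length \<nu> \<and> b < \<nu> ! a}"

text \<open>Tableaux have entries 0,...,m-1 (instead of 1,...,m).\<close>
definition std_tableaux :: "nat list \<Rightarrow> ((nat \<times> nat) \<Rightarrow> nat) set" where
  "std_tableaux \<nu> = {t \<in> nodes \<nu> \<rightarrow>\<^sub>E {..<sum_list \<nu>}.
      bij_betw t (nodes \<nu>) {..<sum_list \<nu>} \<and>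
      (\<forall>a b. (a, Suc b) \<in> nodes \<nu> \<longrightarrow> t (a,b) < t (a, Suc b)) \<and>
      (\<forall>a b. (Suc a, b) \<in> nodes \<nu> \<longrightarrow> t (a,b) < t (Suc a, b))}"

definition tinit :: "nat list \<Rightarrow> (nat \<times> nat) \<Rightarrow> nat" where
  "tinit \<nu> = restrict (\<lambda>(a,b). sum_list (take a \<nu>) + b) (nodes \<nu>)"

text \<open>Permutations of {0..<m}; they act on the right: (i)(\<sigma>\<pi>) = ((i)\<sigma>)\<pi>,
 i.e. the product \<sigma>\<pi> is the function \<pi> \<circ> \<sigma>.\<close>
definition perms :: "nat \<Rightarrow> (nat \<Rightarrow> nat) set" where
  "perms m = {\<sigma>. \<sigma> permutes {..<m}}"

text \<open>d(t): t = t^nu d(t).\<close>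
definition dperm :: "nat list \<Rightarrow> ((nat \<times> nat) \<Rightarrow> nat) \<Rightarrow> nat \<Rightarrow> nat" where
  "dperm \<nu> t = (\<lambda>i. if i < sum_list \<nu> then t (inv_into (nodes \<nu>) (tinit \<nu>) i) else i)"

definition young :: "nat list \<Rightarrow> (nat \<Rightarrow> nat) set" where
  "young \<mu> = {w \<in> perms (sum_list \<mu>). \<forall>i<sum_list \<mu>. block_of \<mu> (w i) = block_of \<mu> i}"

text \<open>Group algebra kS_m: functions from permutations to k.\<close>
definition gdelta :: "(nat \<Rightarrow> nat) \<Rightarrow> (nat \<Rightarrow> nat) \<Rightarrow> 'k::field" where
  "gdelta w = (\<lambda>u. if u = w then 1 else 0)"

definition gmult :: "nat \<Rightarrow> ((nat \<Rightarrow> nat) \<Rightarrow> 'k::field) \<Rightarrow> ((nat \<Rightarrow> nat) \<Rightarrow> 'k) \<Rightarrow> (nat \<Rightarrow> nat) \<Rightarrow> 'k" where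
  "gmult m f g = (\<lambda>w. \<Sum>\<sigma>\<in>perms m. f \<sigma> * g (w \<circ> inv \<sigma>))"

text \<open>x_nu = sum of the row stabiliser of t^nu.\<close>
definition xnu :: "nat list \<Rightarrow> (nat \<Rightarrow> nat) \<Rightarrow> 'k::field" where
  "xnu \<nu> = (\<lambda>w. if w \<in> young \<nu> then 1 else 0)"

text \<open>Murphy basis x_{st} = d(s)^* x_nu d(t), with w^* = w^-1.\<close>
definition murphy :: "nat list \<Rightarrow> ((nat \<times> nat) \<Rightarrow> nat) \<Rightarrow> ((nat \<times> nat) \<Rightarrow> nat) \<Rightarrow> (nat \<Rightarrow> nat) \<Rightarrow> 'k::field" where
  "murphy \<nu> s t = gmult (sum_list \<nu>) (gmult (sum_list \<nu>) (gdelta (inv (dperm \<nu> s))) (xnu \<nu>)) (gdelta (dperm \<nu> t))"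

definition in_higher_span :: "nat list \<Rightarrow> ((nat \<Rightarrow> nat) \<Rightarrow> 'k::field) \<Rightarrow> bool" where
  "in_higher_span \<nu> f \<longleftrightarrow>
    (\<exists>c. f = (\<lambda>w. \<Sum>(\<mu>,u,v) \<in> {(\<mu>,u,v). \<mu> \<in> partitions_of (sum_list \<nu>) \<and>
              dominates_strictly \<mu> \<nu> \<and> u \<in> std_tableaux \<mu> \<and> v \<in> std_tableaux \<mu>}.
              c (\<mu>,u,v) * murphy \<mu> u v w))"

text \<open>Cell form of the cell module S^nu of kS_m (standard cellular structure):
  x_{a s} x_{t b} = <s,t> x_{a b} mod higher terms (take a = b = t^nu).\<close>
definition specht_form :: "nat list \<Rightarrow> ((nat \<times> nat) \<Rightarrow> nat) \<Rightarrow> ((nat \<times> nat) \<Rightarrow> nat) \<Rightarrow> 'k::field" where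
  "specht_form \<nu> s t = (THE c. in_higher_span \<nu>
      (\<lambda>w. gmult (sum_list \<nu>) (murphy \<nu> (tinit \<nu>) s) (murphy \<nu> t (tinit \<nu>)) w
            - c * murphy \<nu> (tinit \<nu>) (tinit \<nu>) w))"

definition multipartition :: "nat \<Rightarrow> nat \<Rightarrow> nat list list \<Rightarrow> bool" where
  "multipartition r n \<nu>s \<longleftrightarrow> length \<nu>s = r \<and> (\<forall>\<nu>\<in>set \<nu>s. is_partition \<nu>) \<and>
     sum_list (map sum_list \<nu>s) = n"

text \<open>Inversion number = Coxeter length.\<close>
definition perm_length :: "nat \<Rightarrow> (nat \<Rightarrow> nat) \<Rightarrow> nat" where
  "perm_length n \<sigma> = card {(a,b). a < b \<and> b < n \<and> \<sigma> b < \<sigma> a}"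

text \<open>Minimal length right coset representatives of S_\<mu> in S_n
 (the coset S_\<mu> \<gamma> = {w\<gamma>}, and w\<gamma> is the function \<gamma> \<circ> w).\<close>
definition coset_reps :: "nat list \<Rightarrow> (nat \<Rightarrow> nat) set" where
  "coset_reps \<mu> = {\<gamma> \<in> perms (sum_list \<mu>). \<forall>w\<in>young \<mu>.
      perm_length (sum_list \<mu>) \<gamma> \<le> perm_length (sum_list \<mu>) (\<gamma> \<circ> w)}"

text \<open>Basis of Delta^(nu_1,...,nu_r): x_1 \<otimes> ... \<otimes> x_n \<otimes> y_1 \<otimes> ... \<otimes> y_r \<otimes> \<gamma>,
 where x_j runs over the basis M(lambda) of Delta(lambda) for the cell lambda of the block
 containing j, y_i over the standard nu_i-tableaux, \<gamma> over coset representatives.\<close>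
definition wr_basis :: "nat \<Rightarrow> (nat \<Rightarrow> 'm set) \<Rightarrow> nat list list \<Rightarrow>
    ('m list \<times> ((nat \<times> nat) \<Rightarrow> nat) list \<times> (nat \<Rightarrow> nat)) set" where
  "wr_basis r M \<nu>s = (let \<mu> = map sum_list \<nu>s; n = sum_list \<mu> in
     {(xs, ys, \<gamma>). length xs = n \<and> (\<forall>j<n. xs ! j \<in> M (block_of \<mu> j)) \<and>
        length ys = r \<and> (\<forall>i<r. ys ! i \<in> std_tableaux (\<nu>s ! i)) \<and> \<gamma> \<in> coset_reps \<mu>})"

definition wr_form ::
  "nat \<Rightarrow> (nat \<times> 'm \<times> 'm \<Rightarrow> nat \<times> 'm \<times> 'm \<Rightarrow> nat \<times> 'm \<times> 'm \<Rightarrow> 'k::field) \<Rightarrow> nat list list \<Rightarrow>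
   ('m list \<times> ((nat \<times> nat) \<Rightarrow> nat) list \<times> (nat \<Rightarrow> nat)) \<Rightarrow>
   ('m list \<times> ((nat \<times> nat) \<Rightarrow> nat) list \<times> (nat \<Rightarrow> nat)) \<Rightarrow> 'k" where
  "wr_form r sc \<nu>s = (\<lambda>(xs, ys, \<gamma>) (xs', ys', \<gamma>').
     (let \<mu> = map sum_list \<nu>s; n = sum_list \<mu> in
      (if \<gamma> = \<gamma>' then 1 else 0) *
      (\<Prod>i<r. specht_form (\<nu>s ! i) (ys ! i) (ys' ! i)) *
      (\<Prod>j<n. cell_form sc (block_of \<mu> j) (xs ! j) (xs' ! j))))"

end

theory Submission
  imports Defs
begin


lemma nondeg_cong:
  assumes "\<And>s t. s \<in> I \<Longrightarrow> t \<in> I \<Longrightarrow> G s t = G' s t"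
  shows "nondeg I G \<longleftrightarrow> nondeg I G'"
  unfolding nondeg_def using assms by (simp cong: sum.cong)

lemma nondeg_times_left:
  fixes GA :: "'a \<Rightarrow> 'a \<Rightarrow> 'k::field" and GB :: "'b \<Rightarrow> 'b \<Rightarrow> 'k"
  assumes B: "b0 \<in> B" and fB: "finite B"
    and nd: "nondeg (A \<times> B) (\<lambda>(a,b) (a',b'). GA a a' * GB b b')"
  shows "nondeg A GA"
  unfolding nondeg_def
proof (intro allI impI)
  fix v assume hv: "\<forall>t\<in>A. (\<Sum>s\<in>A. v s * GA s t) = 0"
  define w where "w = (\<lambda>p. if snd p = b0 then v (fst p) else (0::'k))"
  have K: "\<forall>t\<in>A \<times> B. (\<Sum>s\<in>A \<times> B. w s * (case s of (a,b) \<Rightarrow> \<lambda>(a',b'). GA a a' * GB b b') t) = 0"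
  proof
    fix t assume "t \<in> A \<times> B"
    then obtain t1 t2 where t: "t = (t1,t2)" "t1 \<in> A" by auto
    have "(\<Sum>s\<in>A \<times> B. w s * (case s of (a,b) \<Rightarrow> \<lambda>(a',b'). GA a a' * GB b b') t)
        = (\<Sum>a\<in>A. \<Sum>b\<in>B. w (a,b) * (GA a t1 * GB b t2))"
      unfolding t(1) by (simp add: sum.cartesian_product split_def)
    also have "\<dots> = (\<Sum>a\<in>A. \<Sum>b\<in>B. if b = b0 then v a * (GA a t1 * GB b t2) else 0)"
      by (rule sum.cong[OF refl], rule sum.cong[OF refl]) (simp add: w_def)
    also have "\<dots> = (\<Sum>a\<in>A. v a * (GA a t1 * GB b0 t2))"
      using B fB by (simp add: sum.delta')
    also have "\<dots> = (\<Sum>a\<in>A. v a * GA a t1) * GB b0 t2"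
      by (simp add: sum_distrib_right mult.assoc)
    also have "\<dots> = 0" using hv t(2) by simp
    finally show "(\<Sum>s\<in>A \<times> B. w s * (case s of (a,b) \<Rightarrow> \<lambda>(a',b'). GA a a' * GB b b') t) = 0" .
  qed
  have W: "\<forall>p\<in>A \<times> B. w p = 0"
    using nd[unfolded nondeg_def, THEN spec[of _ w], THEN mp, OF K] .
  show "\<forall>s\<in>A. v s = 0"
  proof
    fix s assume "s \<in> A"
    then have "w (s,b0) = 0" using W B by blast
    then show "v s = 0" by (simp add: w_def)
  qed
qed

lemma nondeg_reindex:
  assumes "inj_on f I"
  shows "nondeg (f ` I) G \<longleftrightarrow> nondeg I (\<lambda>s t. G (f s) (f t))"
proof
  assume nd: "nondeg (f ` I) G"
  show "nondeg I (\<lambda>s t. G (f s) (f t))" unfolding nondeg_def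
  proof (intro allI impI)
    fix v assume hv: "\<forall>t\<in>I. (\<Sum>s\<in>I. v s * G (f s) (f t)) = 0"
    define w where "w = v \<circ> inv_into I f"
    have "\<forall>t\<in>f ` I. (\<Sum>s\<in>f ` I. w s * G s t) = 0"
      using hv assms by (auto simp: sum.reindex w_def)
    then have "\<forall>s\<in>f ` I. w s = 0" using nd unfolding nondeg_def by blast
    then show "\<forall>s\<in>I. v s = 0" using assms by (auto simp: w_def)
  qed
next
  assume nd: "nondeg I (\<lambda>s t. G (f s) (f t))"
  show "nondeg (f ` I) G" unfolding nondeg_def
  proof (intro allI impI)
    fix v assume hv: "\<forall>t\<in>f ` I. (\<Sum>s\<in>f ` I. v s * G s t) = 0"
    have "\<forall>t\<in>I. (\<Sum>s\<in>I. (v \<circ> f) s * G (f s) (f t)) = 0"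
      using hv assms by (auto simp: sum.reindex)
    then have "\<forall>s\<in>I. (v \<circ> f) s = 0" using nd unfolding nondeg_def by blast
    then show "\<forall>s\<in>f ` I. v s = 0" by auto
  qed
qed

lemma nondeg_swap:
  fixes GA :: "'a \<Rightarrow> 'a \<Rightarrow> 'k::field" and GB :: "'b \<Rightarrow> 'b \<Rightarrow> 'k"
  assumes nd: "nondeg (A \<times> B) (\<lambda>(a,b) (a',b'). GA a a' * GB b b')"
  shows "nondeg (B \<times> A) (\<lambda>(a,b) (a',b'). GB a a' * GA b b')"
proof -
  have inj: "inj_on (\<lambda>(a,b). (b,a)) (A \<times> B)" by (auto simp: inj_on_def)
  have im: "(\<lambda>(a,b). (b,a)) ` (A \<times> B) = B \<times> A" by auto
  have "nondeg (B \<times> A) (\<lambda>(a,b) (a',b'). GB a a' * GA b b') \<longleftrightarrow>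
        nondeg (A \<times> B) (\<lambda>s t. (\<lambda>(a,b) (a',b'). GB a a' * GA b b') ((\<lambda>(a,b). (b,a)) s) ((\<lambda>(a,b). (b,a)) t))"
    unfolding im[symmetric] by (rule nondeg_reindex[OF inj])
  also have "\<dots> \<longleftrightarrow> nondeg (A \<times> B) (\<lambda>(a,b) (a',b'). GA a a' * GB b b')"
    by (rule nondeg_cong) (auto simp: mult.commute)
  finally show ?thesis using nd by simp
qed

lemma nondeg_times:
  fixes GA :: "'a \<Rightarrow> 'a \<Rightarrow> 'k::field" and GB :: "'b \<Rightarrow> 'b \<Rightarrow> 'k"
  assumes A: "A \<noteq> {}" and B: "B \<noteq> {}" and fA: "finite A" and fB: "finite B"
  shows "nondeg (A \<times> B) (\<lambda>(a,b) (a',b'). GA a a' * GB b b') \<longleftrightarrow> nondeg A GA \<and> nondeg B GB"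
proof
  assume nd: "nondeg (A \<times> B) (\<lambda>(a,b) (a',b'). GA a a' * GB b b')"
  obtain a0 b0 where "a0 \<in> A" "b0 \<in> B" using A B by blast
  then show "nondeg A GA \<and> nondeg B GB"
    using nondeg_times_left[OF _ fB nd] nondeg_times_left[OF _ fA nondeg_swap[OF nd]] by simp
next
  assume "nondeg A GA \<and> nondeg B GB"
  then have nA: "nondeg A GA" and nB: "nondeg B GB" by auto
  show "nondeg (A \<times> B) (\<lambda>(a,b) (a',b'). GA a a' * GB b b')" unfolding nondeg_def
  proof (intro allI impI)
    fix v assume hv: "\<forall>t\<in>A \<times> B. (\<Sum>s\<in>A \<times> B. v s * (case s of (a,b) \<Rightarrow> \<lambda>(a',b'). GA a a' * GB b b') t) = 0"
    have h2: "(\<Sum>b\<in>B. (\<Sum>a\<in>A. v (a,b) * GA a t) * GB b t') = 0" if "t \<in> A" "t' \<in> B" for t t'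
    proof -
      have "(\<Sum>s\<in>A \<times> B. v s * (case s of (a,b) \<Rightarrow> \<lambda>(a',b'). GA a a' * GB b b') (t,t'))
          = (\<Sum>a\<in>A. \<Sum>b\<in>B. v (a,b) * (GA a t * GB b t'))"
        by (simp add: sum.cartesian_product split_def)
      also have "\<dots> = (\<Sum>b\<in>B. \<Sum>a\<in>A. v (a,b) * (GA a t * GB b t'))" by (rule sum.swap)
      also have "\<dots> = (\<Sum>b\<in>B. (\<Sum>a\<in>A. v (a,b) * GA a t) * GB b t')"
        by (simp add: sum_distrib_right mult.assoc)
      moreover have "(\<Sum>s\<in>A \<times> B. v s * (case s of (a,b) \<Rightarrow> \<lambda>(a',b'). GA a a' * GB b b') (t,t')) = 0"
        using hv that by simp
      ultimately show ?thesis by simp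
    qed
    have h3: "(\<Sum>a\<in>A. v (a,b) * GA a t) = 0" if "t \<in> A" "b \<in> B" for t b
    proof -
      have "\<forall>t'\<in>B. (\<Sum>b\<in>B. (\<Sum>a\<in>A. v (a,b) * GA a t) * GB b t') = 0" using h2 that(1) by simp
      from nB[unfolded nondeg_def, THEN spec[of _ "\<lambda>b. \<Sum>a\<in>A. v (a,b) * GA a t"], THEN mp, OF this]
      show ?thesis using that(2) by simp
    qed
    show "\<forall>s\<in>A \<times> B. v s = 0"
    proof
      fix s assume "s \<in> A \<times> B"
      then obtain a b where s: "s = (a,b)" "a \<in> A" "b \<in> B" by auto
      have "\<forall>t\<in>A. (\<Sum>a\<in>A. v (a,b) * GA a t) = 0" using h3 s by auto
      from nA[unfolded nondeg_def, THEN spec[of _ "\<lambda>a. v (a,b)"], THEN mp, OF this]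
      show "v s = 0" using s by simp
    qed
  qed
qed

definition lprod :: "'a set list \<Rightarrow> 'a list set" where
  "lprod Is = {xs. length xs = length Is \<and> (\<forall>j<length Is. xs ! j \<in> Is ! j)}"

definition lform :: "('a \<Rightarrow> 'a \<Rightarrow> 'k::field) list \<Rightarrow> 'a list \<Rightarrow> 'a list \<Rightarrow> 'k" where
  "lform Gs xs ys = (\<Prod>j<length Gs. (Gs ! j) (xs ! j) (ys ! j))"

lemma lprod_Cons: "lprod (I # Is) = (\<lambda>(x,xs). x # xs) ` (I \<times> lprod Is)"
proof (rule set_eqI, rule iffI)
  fix ys assume "ys \<in> lprod (I # Is)"
  then show "ys \<in> (\<lambda>(x,xs). x # xs) ` (I \<times> lprod Is)"
  proof (cases ys)
    case Nil then show ?thesis using \<open>ys \<in> lprod (I # Is)\<close> by (simp add: lprod_def)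
  next
    case (Cons a l)
    have "a \<in> I" "l \<in> lprod Is" using \<open>ys \<in> lprod (I # Is)\<close> Cons
      by (auto simp: lprod_def)
    then show ?thesis using Cons by (auto intro!: image_eqI[where x="(a,l)"])
  qed
next
  fix ys assume "ys \<in> (\<lambda>(x,xs). x # xs) ` (I \<times> lprod Is)"
  then show "ys \<in> lprod (I # Is)" by (auto simp: lprod_def nth_Cons')
qed

lemma lprod_ne: "\<forall>j<length Is. Is ! j \<noteq> {} \<Longrightarrow> lprod Is \<noteq> {}"
proof -
  assume h: "\<forall>j<length Is. Is ! j \<noteq> {}"
  have "map (\<lambda>j. SOME x. x \<in> Is ! j) [0..<length Is] \<in> lprod Is"
    using h by (auto simp: lprod_def some_in_eq)
  then show ?thesis by blast
qed

lemma finite_lprod: "\<forall>j<length Is. finite (Is ! j) \<Longrightarrow> finite (lprod Is)"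
proof (induction Is)
  case Nil then show ?case by (simp add: lprod_def)
next
  case (Cons I Is)
  have "finite I" using Cons.prems[rule_format, of 0] by simp
  moreover have "\<forall>j<length Is. finite (Is ! j)"
  proof (intro allI impI)
    fix j assume "j < length Is" then show "finite (Is ! j)" using Cons.prems[rule_format, of "Suc j"] by simp
  qed
  then have "finite (lprod Is)" by (rule Cons.IH)
  ultimately have "finite I" "finite (lprod Is)" by auto
  then show ?case unfolding lprod_Cons by simp
qed

lemma nondeg_lprod:
  "length Gs = length Is \<Longrightarrow> \<forall>j<length Is. Is ! j \<noteq> {} \<Longrightarrow> \<forall>j<length Is. finite (Is ! j) \<Longrightarrow>
   nondeg (lprod Is) (lform Gs) \<longleftrightarrow> (\<forall>j<length Is. nondeg (Is ! j) (Gs ! j))"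
proof (induction Is arbitrary: Gs)
  case Nil
  then show ?case by (simp add: lprod_def lform_def nondeg_def)
next
  case (Cons I Is)
  then obtain G Gs' where Gs: "Gs = G # Gs'" by (cases Gs) auto
  have ne: "\<forall>j<length Is. Is ! j \<noteq> {}" "I \<noteq> {}"
  proof -
    show "\<forall>j<length Is. Is ! j \<noteq> {}"
    proof (intro allI impI)
      fix j assume "j < length Is" then show "Is ! j \<noteq> {}" using Cons.prems(2)[rule_format, of "Suc j"] by simp
    qed
    show "I \<noteq> {}" using Cons.prems(2)[rule_format, of 0] by simp
  qed
  have fi: "\<forall>j<length Is. finite (Is ! j)" "finite I"
  proof -
    show "\<forall>j<length Is. finite (Is ! j)"
    proof (intro allI impI)
      fix j assume "j < length Is" then show "finite (Is ! j)" using Cons.prems(3)[rule_format, of "Suc j"] by simp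
    qed
    show "finite I" using Cons.prems(3)[rule_format, of 0] by simp
  qed
  have IH: "nondeg (lprod Is) (lform Gs') \<longleftrightarrow> (\<forall>j<length Is. nondeg (Is ! j) (Gs' ! j))"
    using Cons.IH[of Gs'] Cons.prems(1) Gs ne(1) fi(1) by simp
  have inj: "inj_on (\<lambda>(x,xs). x # xs) (I \<times> lprod Is)" by (auto simp: inj_on_def)
  have "nondeg (lprod (I # Is)) (lform Gs) \<longleftrightarrow>
        nondeg (I \<times> lprod Is) (\<lambda>s t. lform Gs ((\<lambda>(x,xs). x # xs) s) ((\<lambda>(x,xs). x # xs) t))"
    unfolding lprod_Cons by (rule nondeg_reindex[OF inj])
  also have "\<dots> \<longleftrightarrow> nondeg (I \<times> lprod Is) (\<lambda>(a,b) (a',b'). G a a' * lform Gs' b b')"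
    by (rule nondeg_cong) (auto simp only: lform_def Gs length_Cons prod.lessThan_Suc_shift split: prod.splits, simp)
  also have "\<dots> \<longleftrightarrow> nondeg I G \<and> nondeg (lprod Is) (lform Gs')"
    by (rule nondeg_times[OF ne(2) lprod_ne[OF ne(1)] fi(2) finite_lprod[OF fi(1)]])
  also have "\<dots> \<longleftrightarrow> (\<forall>j<length (I # Is). nondeg ((I # Is) ! j) (Gs ! j))"
    using IH Gs by (auto simp: nth_Cons' less_Suc_eq_0_disj)
  finally show ?case .
qed



lemma sum_take_mono: "m \<le> n \<Longrightarrow> sum_list (take m (xs::nat list)) \<le> sum_list (take n xs)"
proof -
  assume "m \<le> n"
  then have "take n xs = take m xs @ take (n - m) (drop m xs)"
    by (metis le_add_diff_inverse take_add)
  then show ?thesis by (metis le_add1 sum_list_append)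
qed

lemma block_of_lt:
  assumes j: "j < sum_list (\<mu>::nat list)"
  shows "block_of \<mu> j < length \<mu> \<and> 0 < \<mu> ! block_of \<mu> j"
proof -
  define P where "P = (\<lambda>i. j < sum_list (take (Suc i) \<mu>))"
  have Pl: "P (length \<mu>)" using j by (simp add: P_def)
  have b: "block_of \<mu> j = (LEAST i. P i)" by (simp add: block_of_def P_def)
  have Pb: "P (block_of \<mu> j)" unfolding b by (rule LeastI[of P, OF Pl])
  have len: "length \<mu> > 0" using j by (cases \<mu>) auto
  have Pl1: "P (length \<mu> - 1)" using j len by (simp add: P_def)
  have "block_of \<mu> j \<le> length \<mu> - 1" unfolding b by (rule Least_le[of P, OF Pl1])
  then have lt: "block_of \<mu> j < length \<mu>" using len by linarith
  have le: "sum_list (take (block_of \<mu> j) \<mu>) \<le> j"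
  proof (cases "block_of \<mu> j")
    case 0 then show ?thesis by simp
  next
    case (Suc k)
    have "\<not> P k" using not_less_Least[of k P] Suc b by simp
    then show ?thesis using Suc by (simp add: P_def)
  qed
  have "j < sum_list (take (block_of \<mu> j) \<mu>) + \<mu> ! block_of \<mu> j"
    using Pb lt by (simp add: P_def take_Suc_conv_app_nth)
  then show ?thesis using lt le by simp
qed

lemma block_of_start:
  assumes i: "i < length (\<mu>::nat list)" and pos: "0 < \<mu> ! i"
  shows "sum_list (take i \<mu>) < sum_list \<mu> \<and> block_of \<mu> (sum_list (take i \<mu>)) = i"
proof -
  define j where "j = sum_list (take i \<mu>)"
  have s: "sum_list (take (Suc i) \<mu>) = j + \<mu> ! i" using i by (simp add: j_def take_Suc_conv_app_nth)
  have "block_of \<mu> j = i" unfolding block_of_def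
  proof (rule Least_equality)
    show "j < sum_list (take (Suc i) \<mu>)" using s pos by simp
  next
    fix k assume "j < sum_list (take (Suc k) \<mu>)"
    then show "i \<le> k" using sum_take_mono[of "Suc k" i \<mu>] unfolding j_def by (meson not_le not_less_eq_eq)
  qed
  moreover have "sum_list (take (Suc i) \<mu>) \<le> sum_list \<mu>"
    using sum_take_mono[of "Suc i" "length \<mu>" \<mu>] i by simp
  ultimately show ?thesis using s pos unfolding j_def by simp
qed

lemma partition_ne: "is_partition \<nu> \<Longrightarrow> \<nu> \<noteq> [] \<longleftrightarrow> 0 < sum_list \<nu>"
  by (cases \<nu>) (auto simp: is_partition_def)

lemma finite_nodes: "finite (nodes \<nu>)"
proof -
  have "nodes \<nu> \<subseteq> (SIGMA a:{..<length \<nu>}. {..<\<nu> ! a})" by (auto simp: nodes_def)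
  then show ?thesis by (rule finite_subset) auto
qed

lemma finite_std: "finite (std_tableaux \<nu>)"
proof -
  have "std_tableaux \<nu> \<subseteq> nodes \<nu> \<rightarrow>\<^sub>E {..<sum_list \<nu>}" by (auto simp: std_tableaux_def)
  then show ?thesis by (rule finite_subset) (simp add: finite_PiE finite_nodes)
qed

lemma finite_coset_reps: "finite (coset_reps \<mu>)"
proof -
  have "coset_reps \<mu> \<subseteq> {\<sigma>. \<sigma> permutes {..<sum_list \<mu>}}" by (auto simp: coset_reps_def perms_def)
  then show ?thesis by (rule finite_subset) (simp add: finite_permutations)
qed

lemma nondeg_delta: "finite C \<Longrightarrow> nondeg C (\<lambda>s t. if s = t then (1::'k::field) else 0)"
  unfolding nondeg_def by (simp add: if_distrib[where f="\<lambda>x. _ * x"] cong: if_cong)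


theorem theorem5p4:
  fixes r n :: nat
    and M :: "nat \<Rightarrow> 'm set"
    and sc :: "nat \<times> 'm \<times> 'm \<Rightarrow> nat \<times> 'm \<times> 'm \<Rightarrow> nat \<times> 'm \<times> 'm \<Rightarrow> 'k::field"
    and \<nu>s :: "nat list list"
  assumes "cellular_algebra r M sc"
    and "multipartition r n \<nu>s"
    and "form_nonzero (wr_basis r M \<nu>s) (wr_form r sc \<nu>s)"
  shows "nondeg (wr_basis r M \<nu>s) (wr_form r sc \<nu>s) \<longleftrightarrow>
           (\<forall>i<r. nondeg (std_tableaux (\<nu>s ! i)) (specht_form (\<nu>s ! i) :: _ \<Rightarrow> _ \<Rightarrow> 'k)) \<and>
           (\<forall>i<r. \<nu>s ! i \<noteq> [] \<longrightarrow> nondeg (M i) (cell_form sc i))"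
proof -
  define \<mu> where "\<mu> = map sum_list \<nu>s"
  define N where "N = sum_list \<mu>"
  have lenr: "length \<nu>s = r" and parts: "\<forall>\<nu>\<in>set \<nu>s. is_partition \<nu>"
    using assms(2) by (auto simp: multipartition_def)
  have lenmu: "length \<mu> = r" using lenr by (simp add: \<mu>_def)
  have finM: "\<forall>i<r. finite (M i)" using assms(1) by (simp add: cellular_algebra_def)
  define Is1 where "Is1 = map (\<lambda>j. M (block_of \<mu> j)) [0..<N]"
  define Gs1 where "Gs1 = map (\<lambda>j. cell_form sc (block_of \<mu> j)) [0..<N]"
  define Is2 where "Is2 = map (\<lambda>i. std_tableaux (\<nu>s ! i)) [0..<r]"
  define Gs2 :: "(((nat \<times> nat) \<Rightarrow> nat) \<Rightarrow> ((nat \<times> nat) \<Rightarrow> nat) \<Rightarrow> 'k) list"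
    where "Gs2 = map (\<lambda>i. specht_form (\<nu>s ! i)) [0..<r]"
  define C where "C = coset_reps \<mu>"
  define D :: "(nat \<Rightarrow> nat) \<Rightarrow> (nat \<Rightarrow> nat) \<Rightarrow> 'k" where "D = (\<lambda>s t. if s = t then 1 else 0)"
  define G23 where "G23 = (\<lambda>(a,b) (a',b'). lform Gs2 a a' * D b b')"
  have WB: "wr_basis r M \<nu>s = lprod Is1 \<times> (lprod Is2 \<times> C)"
    unfolding wr_basis_def Let_def lprod_def Is1_def Is2_def C_def \<mu>_def[symmetric] N_def[symmetric]
    by auto
  have WF: "nondeg (wr_basis r M \<nu>s) (wr_form r sc \<nu>s) \<longleftrightarrow>
      nondeg (lprod Is1 \<times> (lprod Is2 \<times> C)) (\<lambda>(a,b) (a',b'). lform Gs1 a a' * G23 b b')"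
    unfolding WB
    by (rule nondeg_cong) (auto simp: wr_form_def Let_def lform_def Gs1_def Gs2_def G23_def D_def
        \<mu>_def[symmetric] N_def[symmetric])
  obtain xs ys \<gamma> where el: "(xs, ys, \<gamma>) \<in> wr_basis r M \<nu>s"
    using assms(3) unfolding form_nonzero_def by auto
  then have xs: "xs \<in> lprod Is1" and ys: "ys \<in> lprod Is2" and g: "\<gamma> \<in> C" unfolding WB by auto
  have ne1: "\<forall>j<length Is1. Is1 ! j \<noteq> {}" using xs unfolding lprod_def by auto
  have ne2: "\<forall>j<length Is2. Is2 ! j \<noteq> {}" using ys unfolding lprod_def by auto
  have blk: "\<forall>j<N. block_of \<mu> j < r \<and> \<nu>s ! block_of \<mu> j \<noteq> []"
  proof (intro allI impI)
    fix j assume "j < N"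
    then have "block_of \<mu> j < length \<mu> \<and> 0 < \<mu> ! block_of \<mu> j" using block_of_lt N_def by blast
    then show "block_of \<mu> j < r \<and> \<nu>s ! block_of \<mu> j \<noteq> []" using lenmu by (auto simp: \<mu>_def)
  qed
  have fi1: "\<forall>j<length Is1. finite (Is1 ! j)" using blk finM by (simp add: Is1_def)
  have fi2: "\<forall>j<length Is2. finite (Is2 ! j)" by (simp add: Is2_def finite_std)
  have fC: "finite C" by (simp add: C_def finite_coset_reps)
  have L1: "nondeg (lprod Is1) (lform Gs1) \<longleftrightarrow> (\<forall>j<N. nondeg (M (block_of \<mu> j)) (cell_form sc (block_of \<mu> j)))"
    using nondeg_lprod[of Gs1 Is1] ne1 fi1 by (simp add: Is1_def Gs1_def)
  have L2: "nondeg (lprod Is2) (lform Gs2) \<longleftrightarrow> (\<forall>i<r. nondeg (std_tableaux (\<nu>s ! i)) (specht_form (\<nu>s ! i) :: _ \<Rightarrow> _ \<Rightarrow> 'k))"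
    using nondeg_lprod[of Gs2 Is2] ne2 fi2 by (simp add: Is2_def Gs2_def)
  have ne1': "lprod Is1 \<noteq> {}" "lprod Is2 \<noteq> {}" "C \<noteq> {}" using xs ys g by auto
  have fl: "finite (lprod Is1)" "finite (lprod Is2)" using fi1 fi2 finite_lprod by blast+
  have "nondeg (lprod Is1 \<times> (lprod Is2 \<times> C)) (\<lambda>(a,b) (a',b'). lform Gs1 a a' * G23 b b')
      \<longleftrightarrow> nondeg (lprod Is1) (lform Gs1) \<and> nondeg (lprod Is2 \<times> C) G23"
    by (rule nondeg_times) (use ne1' fl fC in auto)
  moreover have "nondeg (lprod Is2 \<times> C) G23 \<longleftrightarrow> nondeg (lprod Is2) (lform Gs2) \<and> nondeg C D"
    unfolding G23_def by (rule nondeg_times) (use ne1' fl fC in auto)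
  moreover have "nondeg C D" unfolding D_def by (rule nondeg_delta[OF fC])
  moreover have "(\<forall>j<N. nondeg (M (block_of \<mu> j)) (cell_form sc (block_of \<mu> j))) \<longleftrightarrow>
      (\<forall>i<r. \<nu>s ! i \<noteq> [] \<longrightarrow> nondeg (M i) (cell_form sc i))"
  proof
    assume h: "\<forall>j<N. nondeg (M (block_of \<mu> j)) (cell_form sc (block_of \<mu> j))"
    show "\<forall>i<r. \<nu>s ! i \<noteq> [] \<longrightarrow> nondeg (M i) (cell_form sc i)"
    proof (intro allI impI)
      fix i assume i: "i < r" and nei: "\<nu>s ! i \<noteq> []"
      have "is_partition (\<nu>s ! i)" using parts i lenr by auto
      then have "0 < \<mu> ! i" using nei partition_ne i lenr by (simp add: \<mu>_def)
      then have "sum_list (take i \<mu>) < N \<and> block_of \<mu> (sum_list (take i \<mu>)) = i"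
        using block_of_start[of i \<mu>] i lenmu N_def by simp
      then show "nondeg (M i) (cell_form sc i)" using h by metis
    qed
  next
    assume h: "\<forall>i<r. \<nu>s ! i \<noteq> [] \<longrightarrow> nondeg (M i) (cell_form sc i)"
    show "\<forall>j<N. nondeg (M (block_of \<mu> j)) (cell_form sc (block_of \<mu> j))"
      using h blk by blast
  qed
  ultimately show ?thesis using WF L1 L2 by blast
qed

end
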